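(* Let $N$ be a necklace with at least two vertices and with exactly $c$ cycles. Then ${\rm mvr}(N)=|N|-c-1$, where $|N|$ is the number of vertices of $N$.
   Context: All graphs are finite and simple. A necklace is a connected graph in which each vertex belongs to at most one cycle. An orthogonal vector representation of a graph $G=(V,E)$ in $\mathbb{R}^d$ is a map $\phi:V\to\mathbb{R}^d$ with $\phi(v)\neq 0$ for all $v$, and for distinct $u,v$: $\langle\phi(u),\phi(v)\rangle=0$ if and only if $uv\notin E$. ${\rm mvr}(G)$ is the smallest $d$ for which such a representation exists. *)

theory Defs
  imports Complex_Main
begin

definition simple_graph :: "'a set \<Rightarrow> 'a set set \<Rightarrow> bool" where
  "simple_graph V E \<longleftrightarrow> finite V \<and> (\<forall>e\<in>E. e \<subseteq> V \<and> card e = 2)"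

definition connected_graph :: "'a set \<Rightarrow> 'a set set \<Rightarrow> bool" where
  "connected_graph V E \<longleftrightarrow> V \<noteq> {} \<and>
     (\<forall>u\<in>V. \<forall>v\<in>V. (u, v) \<in> {(x, y). {x, y} \<in> E}\<^sup>*)"

definition cycle_edges :: "'a list \<Rightarrow> 'a set set" where
  "cycle_edges vs = {{vs ! i, vs ! ((i + 1) mod length vs)} | i. i < length vs}"

text \<open>The cycles of G, each identified with its (nonempty) edge set, i.e. as subgraphs.\<close>
definition cycles :: "'a set \<Rightarrow> 'a set set \<Rightarrow> 'a set set set" where
  "cycles V E = {cycle_edges vs | vs. distinct vs \<and> length vs \<ge> 3 \<and> set vs \<subseteq> V
                                     \<and> cycle_edges vs \<subseteq> E}"

definition necklace :: "'a set \<Rightarrow> 'a set set \<Rightarrow> bool" where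
  "necklace V E \<longleftrightarrow> connected_graph V E \<and>
     (\<forall>v\<in>V. card {C \<in> cycles V E. v \<in> \<Union>C} \<le> 1)"

text \<open>Orthogonal vector representation in R^d; vectors of R^d are encoded as
  functions nat \<Rightarrow> real, only the coordinates i < d being relevant.\<close>
definition orth_rep :: "'a set \<Rightarrow> 'a set set \<Rightarrow> nat \<Rightarrow> ('a \<Rightarrow> nat \<Rightarrow> real) \<Rightarrow> bool" where
  "orth_rep V E d \<phi> \<longleftrightarrow>
     (\<forall>v\<in>V. \<exists>i<d. \<phi> v i \<noteq> 0) \<and>
     (\<forall>u\<in>V. \<forall>v\<in>V. u \<noteq> v \<longrightarrow> ((\<Sum>i<d. \<phi> u i * \<phi> v i) = 0 \<longleftrightarrow> {u, v} \<notin> E))"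

definition mvr :: "'a set \<Rightarrow> 'a set set \<Rightarrow> nat" where
  "mvr V E = (LEAST d. \<exists>\<phi>. orth_rep V E d \<phi>)"

end

theory Submission
  imports Defs
begin


definition indep :: "nat \<Rightarrow> ('a \<Rightarrow> nat \<Rightarrow> real) \<Rightarrow> 'a set \<Rightarrow> bool" where
  "indep d f T \<longleftrightarrow> (\<forall>x. (\<forall>i<d. (\<Sum>w\<in>T. x w * f w i) = 0) \<longrightarrow> (\<forall>w\<in>T. x w = 0))"

lemma indep_card_le:
  assumes "finite T" "indep d f T"
  shows "card T \<le> d"
  using assms
proof (induction d arbitrary: T f)
  case 0
  show ?case
  proof (rule ccontr)
    assume "\<not> card T \<le> 0"
    then obtain w where w: "w \<in> T" using card.empty by (metis all_not_in_conv le_zero_eq)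
    have "\<forall>w\<in>T. (\<lambda>_. 1::real) w = 0" using "0.prems"(2) unfolding indep_def by (drule_tac x="\<lambda>_. 1" in spec) simp
    with w show False by simp
  qed
next
  case (Suc d)
  show ?case
  proof (cases "\<forall>w\<in>T. f w d = 0")
    case True
    have "indep d f T" unfolding indep_def
    proof (intro allI impI)
      fix x assume h: "\<forall>i<d. (\<Sum>w\<in>T. x w * f w i) = 0"
      have "\<forall>i<Suc d. (\<Sum>w\<in>T. x w * f w i) = 0"
      proof (intro allI impI)
        fix i assume "i < Suc d"
        then consider "i < d" | "i = d" by linarith
        then show "(\<Sum>w\<in>T. x w * f w i) = 0"
          by cases (use h True in auto)
      qed
      then show "\<forall>w\<in>T. x w = 0" using Suc.prems(2) unfolding indep_def by blast
    qed
    then have "card T \<le> d" using Suc.IH Suc.prems(1) by blast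
    then show ?thesis by simp
  next
    case False
    then obtain w0 where w0: "w0 \<in> T" "f w0 d \<noteq> 0" by blast
    define g where "g w i = f w i - f w d / f w0 d * f w0 i" for w i
    have "indep d g (T - {w0})" unfolding indep_def
    proof (intro allI impI)
      fix x assume h: "\<forall>i<d. (\<Sum>w\<in>T - {w0}. x w * g w i) = 0"
      define x' where "x' = x(w0 := - (\<Sum>w\<in>T-{w0}. x w * f w d) / f w0 d)"
      have eq: "(\<Sum>w\<in>T. x' w * f w i) = (\<Sum>w\<in>T - {w0}. x w * g w i)" for i
      proof -
        have "(\<Sum>w\<in>T. x' w * f w i) = x' w0 * f w0 i + (\<Sum>w\<in>T-{w0}. x' w * f w i)"
          using Suc.prems(1) w0(1) by (simp add: sum.remove)
        also have "(\<Sum>w\<in>T-{w0}. x' w * f w i) = (\<Sum>w\<in>T-{w0}. x w * f w i)"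
          by (rule sum.cong) (auto simp: x'_def)
        also have "(\<Sum>w\<in>T - {w0}. x w * g w i) = (\<Sum>w\<in>T-{w0}. x w * f w i)
              - (\<Sum>w\<in>T-{w0}. x w * f w d) / f w0 d * f w0 i"
          unfolding g_def by (simp add: algebra_simps sum_subtractf sum_distrib_left sum_distrib_right sum_divide_distrib)
        ultimately show ?thesis by (simp add: x'_def)
      qed
      have "\<forall>i<Suc d. (\<Sum>w\<in>T. x' w * f w i) = 0"
      proof (intro allI impI)
        fix i assume "i < Suc d"
        then consider "i < d" | "i = d" by linarith
        then show "(\<Sum>w\<in>T. x' w * f w i) = 0"
        proof cases
          case 1 then show ?thesis using h eq by simp
        next
          case 2 then show ?thesis unfolding eq g_def using w0(2) by simp
        qed
      qed
      then have "\<forall>w\<in>T. x' w = 0" using Suc.prems(2) unfolding indep_def by blast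
      then show "\<forall>w\<in>T - {w0}. x w = 0" unfolding x'_def by (metis DiffE fun_upd_other singletonI)
    qed
    then have "card (T - {w0}) \<le> d" using Suc.IH Suc.prems(1) by blast
    then show ?thesis using w0(1) Suc.prems(1) by (simp add: card_Diff_singleton)
  qed
qed


definition rel :: "'a set set \<Rightarrow> ('a \<times> 'a) set" where
  "rel E = {(x, y). {x, y} \<in> E}"

definition walk :: "'a set set \<Rightarrow> 'a list \<Rightarrow> bool" where
  "walk E p \<longleftrightarrow> (\<forall>i. Suc i < length p \<longrightarrow> {p ! i, p ! Suc i} \<in> E)"

lemma rel_iff[simp]: "(x, y) \<in> rel E \<longleftrightarrow> {x, y} \<in> E"
  by (simp add: rel_def)

lemma connected_rel: "connected_graph V E \<longleftrightarrow> V \<noteq> {} \<and> (\<forall>u\<in>V. \<forall>v\<in>V. (u, v) \<in> (rel E)\<^sup>*)"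
  unfolding connected_graph_def rel_def by simp

lemma converse_rel: "(rel E)\<inverse> = rel E"
  by (auto simp: rel_def insert_commute)

lemma rel_sym_rtrancl: "(x, y) \<in> (rel E)\<^sup>* \<Longrightarrow> (y, x) \<in> (rel E)\<^sup>*"
  by (metis converse_rel rtrancl_converseI)

lemma rel_mono: "E \<subseteq> F \<Longrightarrow> rel E \<subseteq> rel F"
  by (auto simp: rel_def)

lemma rel_mono_rtrancl: "E \<subseteq> F \<Longrightarrow> (x, y) \<in> (rel E)\<^sup>* \<Longrightarrow> (x, y) \<in> (rel F)\<^sup>*"
  using rtrancl_mono[OF rel_mono] by blast

lemma walk_Cons: "walk E (x # y # p) \<longleftrightarrow> {x, y} \<in> E \<and> walk E (y # p)"
proof
  assume h: "walk E (x # y # p)"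
  have "{x, y} \<in> E" using h[unfolded walk_def, rule_format, of 0] by simp
  moreover have "walk E (y # p)" unfolding walk_def
  proof (intro allI impI)
    fix i assume "Suc i < length (y # p)"
    then show "{(y # p) ! i, (y # p) ! Suc i} \<in> E"
      using h[unfolded walk_def, rule_format, of "Suc i"] by simp
  qed
  ultimately show "{x, y} \<in> E \<and> walk E (y # p)" by simp
next
  assume h: "{x, y} \<in> E \<and> walk E (y # p)"
  show "walk E (x # y # p)" unfolding walk_def
  proof (intro allI impI)
    fix i assume i: "Suc i < length (x # y # p)"
    show "{(x # y # p) ! i, (x # y # p) ! Suc i} \<in> E"
    proof (cases i)
      case 0 then show ?thesis using h by simp
    next
      case (Suc j) then show ?thesis using h i unfolding walk_def by auto
    qed
  qed
qed

lemma walk_single[simp]: "walk E [x]"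
  by (simp add: walk_def)

lemma walk_drop: "walk E p \<Longrightarrow> walk E (drop j p)"
  unfolding walk_def by (auto simp: add.commute[of j] intro!: allI)

lemma walk_mono: "walk E p \<Longrightarrow> E \<subseteq> F \<Longrightarrow> walk F p"
  unfolding walk_def by blast

lemma rtrancl_path:
  assumes "(x, y) \<in> (rel E)\<^sup>*"
  shows "\<exists>p. p \<noteq> [] \<and> hd p = x \<and> last p = y \<and> distinct p \<and> walk E p"
  using assms
proof (induction rule: converse_rtrancl_induct)
  case base
  show ?case by (rule exI[of _ "[y]"]) simp
next
  case (step x z)
  then obtain p where p: "p \<noteq> []" "hd p = z" "last p = y" "distinct p" "walk E p" by blast
  show ?case
  proof (cases "x \<in> set p")
    case False
    obtain q where q: "p = z # q" using p(1,2) by (cases p) auto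
    have "walk E (x # p)" using step(1) p(5) q walk_Cons by fastforce
    then show ?thesis using False p by (intro exI[of _ "x # p"]) auto
  next
    case True
    then obtain j where j: "j < length p" "p ! j = x" by (auto simp: in_set_conv_nth)
    have "drop j p \<noteq> []" using j by simp
    moreover have "hd (drop j p) = x" using j by (simp add: hd_drop_conv_nth)
    moreover have "last (drop j p) = y" using j p by simp
    ultimately show ?thesis using p walk_drop by (intro exI[of _ "drop j p"]) auto
  qed
qed

lemma walk_rtrancl:
  assumes "walk E p" "j < length p" "i \<le> j"
  shows "(p ! i, p ! j) \<in> (rel E)\<^sup>*"
  using assms(2,3)
proof (induction j)
  case 0 then show ?case by simp
next
  case (Suc j)
  show ?case
  proof (cases "i = Suc j")
    case True then show ?thesis by simp
  next
    case False
    then have "(p ! i, p ! j) \<in> (rel E)\<^sup>*" using Suc by simp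
    moreover have "{p ! j, p ! Suc j} \<in> E" using assms(1) Suc.prems unfolding walk_def by blast
    ultimately show ?thesis by (simp add: rtrancl_into_rtrancl)
  qed
qed

lemma walk_set:
  assumes "walk E p" "2 \<le> length p"
  shows "set p \<subseteq> \<Union>E"
proof
  fix x assume "x \<in> set p"
  then obtain i where i: "i < length p" "p ! i = x" by (auto simp: in_set_conv_nth)
  show "x \<in> \<Union>E"
  proof (cases "Suc i < length p")
    case True
    then show ?thesis using assms(1) i unfolding walk_def by blast
  next
    case False
    then have "i = Suc (i - 1)" "Suc (i - 1) < length p" using i assms(2) by auto
    then have "{p ! (i - 1), p ! i} \<in> E" using assms(1) unfolding walk_def by metis
    then show ?thesis using i by blast
  qed
qed

lemma Union_cycle_edges:
  assumes "vs \<noteq> []"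
  shows "\<Union>(cycle_edges vs) = set vs"
proof
  show "\<Union>(cycle_edges vs) \<subseteq> set vs"
    unfolding cycle_edges_def using assms by (auto intro!: nth_mem)
next
  show "set vs \<subseteq> \<Union>(cycle_edges vs)"
  proof
    fix x assume "x \<in> set vs"
    then obtain i where i: "i < length vs" "vs ! i = x" by (auto simp: in_set_conv_nth)
    then show "x \<in> \<Union>(cycle_edges vs)" unfolding cycle_edges_def by blast
  qed
qed

lemma cycle_edges_sub:
  assumes "walk E p" "length p \<ge> 3" "{last p, hd p} \<in> E"
  shows "cycle_edges p \<subseteq> E"
proof
  fix e assume "e \<in> cycle_edges p"
  then obtain i where i: "i < length p" "e = {p ! i, p ! ((i + 1) mod length p)}"
    unfolding cycle_edges_def by blast
  show "e \<in> E"
  proof (cases "Suc i < length p")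
    case True
    then show ?thesis using assms(1) i unfolding walk_def by simp
  next
    case False
    then have "Suc i = length p" using i by auto
    then have "i = length p - 1" "(i + 1) mod length p = 0" by auto
    moreover have "p \<noteq> []" using assms(2) by auto
    ultimately show ?thesis using i assms(3) by (simp add: last_conv_nth hd_conv_nth)
  qed
qed

lemma cycle_in_cycles:
  assumes "walk E p" "length p \<ge> 3" "{last p, hd p} \<in> E" "distinct p" "set p \<subseteq> V"
  shows "cycle_edges p \<in> cycles V E"
  using cycle_edges_sub[OF assms(1-3)] assms(2,4,5) unfolding cycles_def by blast

lemma cycle_edge_subset_set: "e \<in> cycle_edges vs \<Longrightarrow> e \<subseteq> set vs"
proof -
  assume "e \<in> cycle_edges vs"
  then obtain i where i: "i < length vs" "e = {vs ! i, vs ! ((i + 1) mod length vs)}"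
    unfolding cycle_edges_def by blast
  have "(i + 1) mod length vs < length vs" using i(1) by (intro mod_less_divisor) linarith
  then show "e \<subseteq> set vs" using i by auto
qed

lemma cycles_sub_Pow: "cycles V E \<subseteq> Pow (Pow V)"
  unfolding cycles_def using cycle_edge_subset_set by blast

lemma finite_cycles: "finite V \<Longrightarrow> finite (cycles V E)"
  by (meson cycles_sub_Pow finite_Pow_iff finite_subset)

lemma cycles_del:
  "cycles (V - {v}) {e \<in> E. v \<notin> e} = {C \<in> cycles V E. v \<notin> \<Union>C}"
proof
  show "cycles (V - {v}) {e \<in> E. v \<notin> e} \<subseteq> {C \<in> cycles V E. v \<notin> \<Union>C}"
    unfolding cycles_def by auto
next
  show "{C \<in> cycles V E. v \<notin> \<Union>C} \<subseteq> cycles (V - {v}) {e \<in> E. v \<notin> e}"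
  proof
    fix C assume "C \<in> {C \<in> cycles V E. v \<notin> \<Union>C}"
    then obtain vs where vs: "C = cycle_edges vs" "distinct vs" "length vs \<ge> 3" "set vs \<subseteq> V"
      "cycle_edges vs \<subseteq> E" "v \<notin> \<Union>C"
      unfolding cycles_def by blast
    have ne: "vs \<noteq> []" using vs(3) by auto
    have "set vs \<subseteq> V - {v}" using vs(4,6) Union_cycle_edges[OF ne] vs(1) by auto
    moreover have "cycle_edges vs \<subseteq> {e \<in> E. v \<notin> e}" using vs(5,6) vs(1) by auto
    ultimately show "C \<in> cycles (V - {v}) {e \<in> E. v \<notin> e}"
      unfolding cycles_def using vs by blast
  qed
qed


lemma edge_card: "simple_graph V E \<Longrightarrow> {x, y} \<in> E \<Longrightarrow> x \<noteq> y \<and> x \<in> V \<and> y \<in> V"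
proof -
  assume "simple_graph V E" "{x, y} \<in> E"
  then have "card {x, y} = 2" "{x, y} \<subseteq> V" unfolding simple_graph_def by auto
  then show ?thesis by (cases "x = y") auto
qed

lemma first_step:
  assumes "(x, y) \<in> (rel E)\<^sup>*" "x \<noteq> y"
  shows "\<exists>u. {x, u} \<in> E"
  using assms by (induction rule: converse_rtrancl_induct) auto

lemma reach_nbr:
  assumes "(x, v) \<in> (rel E)\<^sup>*" "x \<noteq> v" "simple_graph V E"
  shows "\<exists>u. (x, u) \<in> (rel {e \<in> E. v \<notin> e})\<^sup>* \<and> {u, v} \<in> E"
  using assms
proof (induction rule: converse_rtrancl_induct)
  case base then show ?case by simp
next
  case (step x y)
  show ?case
  proof (cases "y = v")
    case True
    then show ?thesis using step by auto
  next
    case False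
    then obtain u where u: "(y, u) \<in> (rel {e \<in> E. v \<notin> e})\<^sup>*" "{u, v} \<in> E" using step by blast
    have "(x, y) \<in> rel {e \<in> E. v \<notin> e}" using step(1) False step.prems(1) by auto
    then show ?thesis using u by (meson converse_rtrancl_into_rtrancl)
  qed
qed

lemma exists_noncut:
  assumes sg: "simple_graph V E" and cg: "connected_graph V E" and c2: "card V \<ge> 2"
  shows "\<exists>v\<in>V. connected_graph (V - {v}) {e \<in> E. v \<notin> e}"
proof -
  have finV: "finite V" using sg unfolding simple_graph_def by blast
  define P where "P = {p. p \<noteq> [] \<and> distinct p \<and> set p \<subseteq> V \<and> walk E p}"
  have "P \<subseteq> {p. set p \<subseteq> V \<and> length p \<le> card V}"
  proof
    fix p assume "p \<in> P"
    then have "distinct p" "set p \<subseteq> V" unfolding P_def by auto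
    then show "p \<in> {p. set p \<subseteq> V \<and> length p \<le> card V}"
      using distinct_card[of p] card_mono[OF finV, of "set p"] by simp
  qed
  then have finP: "finite P" using finite_lists_length_le[OF finV] finite_subset by blast
  obtain x0 where x0: "x0 \<in> V" using cg unfolding connected_rel by blast
  have "[x0] \<in> P" using x0 unfolding P_def by simp
  then have neP: "P \<noteq> {}" by blast
  define m where "m = Max (length ` P)"
  have "m \<in> length ` P" unfolding m_def using finP neP by simp
  then obtain p where pP: "p \<in> P" and pm: "length p = m" by blast
  have maxp: "length q \<le> length p" if "q \<in> P" for q
    using that finP pm unfolding m_def by simp
  have p: "p \<noteq> []" "distinct p" "set p \<subseteq> V" "walk E p" using pP unfolding P_def by auto
  define v where "v = hd p"
  have vV: "v \<in> V" using p v_def by (simp add: subset_iff)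
  have NB: "u \<in> set p" if "{u, v} \<in> E" for u
  proof (rule ccontr)
    assume un: "u \<notin> set p"
    obtain q where q: "p = v # q" using p(1) v_def by (cases p) auto
    have "walk E (u # p)" using that p(4) q walk_Cons by fastforce
    moreover have "u \<in> V" using edge_card[OF sg that] by blast
    ultimately have "u # p \<in> P" using un p unfolding P_def by auto
    then show False using maxp by fastforce
  qed
  have "V \<noteq> {v}" using c2 by auto
  then obtain w where w: "w \<in> V" "w \<noteq> v" using vV by blast
  have "(v, w) \<in> (rel E)\<^sup>*" using cg vV w unfolding connected_rel by blast
  then obtain u0 where u0: "{v, u0} \<in> E" using first_step w(2) by metis
  have "u0 \<in> set p" using NB u0 by (simp add: insert_commute)
  moreover have "u0 \<noteq> v" using edge_card[OF sg u0] by blast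
  ultimately have lp: "length p \<ge> 2" using v_def p(1)
    by (cases p; cases "tl p") auto
  define p1 where "p1 = p ! 1"
  define E' where "E' = {e \<in> E. v \<notin> e}"
  have v0: "p ! 0 = v" using v_def p(1) by (simp add: hd_conv_nth)
  have C1: "(p1, p ! j) \<in> (rel E')\<^sup>*" if "1 \<le> j" "j < length p" for j
  proof -
    have "walk E' (drop 1 p)" unfolding walk_def E'_def
    proof (intro allI impI)
      fix i assume i: "Suc i < length (drop 1 p)"
      have e: "{p ! Suc i, p ! Suc (Suc i)} \<in> E" using p(4) i unfolding walk_def by simp
      have b: "Suc (Suc i) < length p" using i by simp
      have "p ! Suc i \<noteq> p ! 0" using nth_eq_iff_index_eq[OF p(2), of "Suc i" 0] b p(1) by simp
      moreover have "p ! Suc (Suc i) \<noteq> p ! 0" using nth_eq_iff_index_eq[OF p(2), of "Suc (Suc i)" 0] b p(1) by simp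
      ultimately have "p ! Suc i \<noteq> v" "p ! Suc (Suc i) \<noteq> v" using v0 by auto
      then show "{drop 1 p ! i, drop 1 p ! Suc i} \<in> {e \<in> E. v \<notin> e}"
        using e i by simp
    qed
    from walk_rtrancl[OF this, of "j - 1" 0] that show ?thesis unfolding p1_def by simp
  qed
  have C2: "(x, p1) \<in> (rel E')\<^sup>*" if xV: "x \<in> V - {v}" for x
  proof -
    have "(x, v) \<in> (rel E)\<^sup>*" using cg that vV unfolding connected_rel by blast
    then obtain u where u: "(x, u) \<in> (rel E')\<^sup>*" "{u, v} \<in> E"
      using reach_nbr[of x v E V] xV sg unfolding E'_def by auto
    have "u \<in> set p" using NB u(2) by blast
    then obtain j where j: "j < length p" "p ! j = u" by (auto simp: in_set_conv_nth)
    have "u \<noteq> v" using edge_card[OF sg u(2)] by blast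
    then have "1 \<le> j" using j v0 by (cases j) auto
    then have "(p1, u) \<in> (rel E')\<^sup>*" using C1 j by blast
    then have "(u, p1) \<in> (rel E')\<^sup>*" by (rule rel_sym_rtrancl)
    then show ?thesis using u(1) by (rule rtrancl_trans[rotated])
  qed
  have "V - {v} \<noteq> {}" using w by blast
  moreover have "\<forall>x\<in>V - {v}. \<forall>y\<in>V - {v}. (x, y) \<in> (rel E')\<^sup>*"
  proof (intro ballI)
    fix x y assume "x \<in> V - {v}" "y \<in> V - {v}"
    then show "(x, y) \<in> (rel E')\<^sup>*" using C2[of x] rel_sym_rtrancl[OF C2[of y]] by (rule_tac rtrancl_trans) auto
  qed
  ultimately have "connected_graph (V - {v}) E'" unfolding connected_rel rel_def by simp
  then show ?thesis using vV unfolding E'_def by blast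
qed

lemma cycle_edge_in: "j < length vs \<Longrightarrow> {vs ! j, vs ! ((j + 1) mod length vs)} \<in> cycle_edges vs"
  unfolding cycle_edges_def by blast

lemma pendant_no_cycle:
  assumes sg: "simple_graph V E" and uniq: "\<forall>w. {v, w} \<in> E \<longrightarrow> w = u" and C: "C \<in> cycles V E"
  shows "v \<notin> \<Union>C"
proof
  assume vC: "v \<in> \<Union>C"
  obtain vs where vs: "C = cycle_edges vs" "distinct vs" "length vs \<ge> 3" "set vs \<subseteq> V"
      "cycle_edges vs \<subseteq> E" using C unfolding cycles_def by blast
  define k where "k = length vs"
  have ne: "vs \<noteq> []" using vs(3) by auto
  have "v \<in> set vs" using vC vs(1) Union_cycle_edges[OF ne] by simp
  then obtain i where i: "i < k" "vs ! i = v" unfolding k_def by (auto simp: in_set_conv_nth)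
  define j1 where "j1 = (if i + 1 = k then 0 else i + 1)"
  define j2 where "j2 = (if i = 0 then k - 1 else i - 1)"
  have k3: "k \<ge> 3" using vs(3) k_def by simp
  have j1: "(i + 1) mod k = j1" "j1 < k" using i k3 unfolding j1_def by auto
  have j2: "(j2 + 1) mod k = i" "j2 < k" using i k3 unfolding j2_def by auto
  have "j1 \<noteq> j2" using i k3 unfolding j1_def j2_def by auto
  have e1: "{v, vs ! j1} \<in> E" using cycle_edge_in[of i vs] i j1 vs(5) k_def by auto
  have e2: "{vs ! j2, v} \<in> E" using cycle_edge_in[of j2 vs] i j2 vs(5) k_def by auto
  have "vs ! j1 = u" using uniq e1 by blast
  moreover have "vs ! j2 = u" using uniq e2 by (simp add: insert_commute)
  ultimately have "j1 = j2" using vs(2) j1(2) j2(2) k_def by (metis nth_eq_iff_index_eq)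
  then show False using \<open>j1 \<noteq> j2\<close> by simp
qed

lemma cycle_through:
  assumes sg: "simple_graph V E" and vV: "v \<in> V" and a: "{v, a} \<in> E" and b: "{v, b} \<in> E" and ab: "a \<noteq> b"
    and cg: "connected_graph (V - {v}) {e \<in> E. v \<notin> e}"
  shows "\<exists>C\<in>cycles V E. v \<in> \<Union>C"
proof -
  define E' where "E' = {e \<in> E. v \<notin> e}"
  have aV: "a \<in> V - {v}" "b \<in> V - {v}" using edge_card[OF sg a] edge_card[OF sg b] by auto
  then have "(a, b) \<in> (rel E')\<^sup>*" using cg unfolding connected_rel E'_def by blast
  then obtain q where q: "q \<noteq> []" "hd q = a" "last q = b" "distinct q" "walk E' q"
    using rtrancl_path by metis
  have lq: "length q \<ge> 2" using q ab by (cases q; cases "tl q") auto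
  have "set q \<subseteq> \<Union>E'" using walk_set[OF q(5) lq] .
  then have sq: "set q \<subseteq> V - {v}" unfolding E'_def using sg unfolding simple_graph_def by blast
  obtain q' where q': "q = a # q'" using q(1,2) by (cases q) auto
  have wq: "walk E q" using walk_mono[OF q(5)] unfolding E'_def by blast
  have w: "walk E (v # q)" using wq a q' walk_Cons by fastforce
  have "{last (v # q), hd (v # q)} \<in> E" using b q(1,3) by (simp add: insert_commute)
  moreover have "length (v # q) \<ge> 3" using lq by simp
  moreover have "distinct (v # q)" using q(4) sq by auto
  moreover have "set (v # q) \<subseteq> V" using sq vV by auto
  ultimately have "cycle_edges (v # q) \<in> cycles V E" using cycle_in_cycles w by blast
  moreover have "v \<in> \<Union>(cycle_edges (v # q))" using Union_cycle_edges[of "v # q"] by simp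
  ultimately show ?thesis by blast
qed

lemma necklace_del:
  assumes "necklace V E" "connected_graph (V - {v}) {e \<in> E. v \<notin> e}" "finite V"
  shows "necklace (V - {v}) {e \<in> E. v \<notin> e}"
  unfolding necklace_def
proof (intro conjI ballI)
  show "connected_graph (V - {v}) {e \<in> E. v \<notin> e}" by fact
  fix w assume w: "w \<in> V - {v}"
  have "{C \<in> cycles (V - {v}) {e \<in> E. v \<notin> e}. w \<in> \<Union>C} \<subseteq> {C \<in> cycles V E. w \<in> \<Union>C}"
    unfolding cycles_del[of V v E] by blast
  moreover have "finite {C \<in> cycles V E. w \<in> \<Union>C}" using finite_cycles[OF assms(3)] by simp
  ultimately have "card {C \<in> cycles (V - {v}) {e \<in> E. v \<notin> e}. w \<in> \<Union>C} \<le> card {C \<in> cycles V E. w \<in> \<Union>C}"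
    by (rule card_mono[rotated])
  also have "\<dots> \<le> 1" using assms(1) w unfolding necklace_def by blast
  finally show "card {C \<in> cycles (V - {v}) {e \<in> E. v \<notin> e}. w \<in> \<Union>C} \<le> 1" .
qed

lemma simple_del: "simple_graph V E \<Longrightarrow> simple_graph (V - {v}) {e \<in> E. v \<notin> e}"
  unfolding simple_graph_def by auto

lemma card_cycles_del:
  assumes "necklace V E" "finite V" "v \<in> V" "C \<in> cycles V E" "v \<in> \<Union>C"
  shows "card (cycles V E) = card (cycles (V - {v}) {e \<in> E. v \<notin> e}) + 1"
proof -
  have fin: "finite (cycles V E)" using finite_cycles[OF assms(2)] .
  have le: "card {C \<in> cycles V E. v \<in> \<Union>C} \<le> 1" using assms(1,3) unfolding necklace_def by blast
  have "{C \<in> cycles V E. v \<in> \<Union>C} \<noteq> {}" using assms(4,5) by blast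
  then have "card {C \<in> cycles V E. v \<in> \<Union>C} \<noteq> 0" using fin by simp
  with le have one: "card {C \<in> cycles V E. v \<in> \<Union>C} = 1" by linarith
  have "cycles V E = {C \<in> cycles V E. v \<notin> \<Union>C} \<union> {C \<in> cycles V E. v \<in> \<Union>C}" by blast
  then have "card (cycles V E) = card {C \<in> cycles V E. v \<notin> \<Union>C} + card {C \<in> cycles V E. v \<in> \<Union>C}"
    using fin card_Un_disjoint[of "{C \<in> cycles V E. v \<notin> \<Union>C}" "{C \<in> cycles V E. v \<in> \<Union>C}"] by auto
  then show ?thesis using one cycles_del[of V v E] by simp
qed


definition ip :: "nat \<Rightarrow> (nat \<Rightarrow> real) \<Rightarrow> (nat \<Rightarrow> real) \<Rightarrow> real" where
  "ip d f g = (\<Sum>i<d. f i * g i)"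

lemma orth_rep_ip: "orth_rep V E d \<phi> \<longleftrightarrow> (\<forall>v\<in>V. \<exists>i<d. \<phi> v i \<noteq> 0) \<and>
     (\<forall>u\<in>V. \<forall>v\<in>V. u \<noteq> v \<longrightarrow> (ip d (\<phi> u) (\<phi> v) = 0 \<longleftrightarrow> {u, v} \<notin> E))"
  unfolding orth_rep_def ip_def by simp

lemma ip_self_pos: "\<exists>i<d. f i \<noteq> 0 \<Longrightarrow> ip d f f > 0"
  unfolding ip_def
proof -
  assume "\<exists>i<d. f i \<noteq> 0"
  then obtain i where i: "i < d" "f i \<noteq> 0" by blast
  have "0 < f i * f i" using i(2) by (metis not_real_square_gt_zero)
  also have "\<dots> \<le> (\<Sum>i<d. f i * f i)"
    using i(1) by (intro member_le_sum) auto
  finally show "0 < (\<Sum>i<d. f i * f i)" .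
qed

lemma orth_rep_del: "orth_rep V E d \<phi> \<Longrightarrow> orth_rep (V - {v}) {e \<in> E. v \<notin> e} d \<phi>"
  unfolding orth_rep_def by auto

lemma indep_single: "\<exists>i<d. \<phi> v i \<noteq> 0 \<Longrightarrow> indep d \<phi> {v}"
  unfolding indep_def by auto

lemma pendant_step:
  assumes rep: "orth_rep V E d \<phi>" and sg: "simple_graph V E" and vV: "v \<in> V"
    and uniq: "\<forall>w. {v, w} \<in> E \<longrightarrow> w = u" and vu: "{v, u} \<in> E"
    and w0: "w0 \<in> V" "w0 \<noteq> u" "{u, w0} \<in> E" and w0v: "w0 \<noteq> v"
  defines "t \<equiv> ip d (\<phi> u) (\<phi> v) / ip d (\<phi> v) (\<phi> v)"
  defines "\<psi> \<equiv> \<phi>(u := (\<lambda>i. \<phi> u i - t * \<phi> v i))"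
  shows "orth_rep (V - {v}) {e \<in> E. v \<notin> e} d \<psi>"
    and "\<And>T. finite T \<Longrightarrow> T \<subseteq> V - {v} \<Longrightarrow> indep d \<psi> T \<Longrightarrow> indep d \<phi> (insert v T)"
proof -
  have uv: "u \<noteq> v" "u \<in> V" using edge_card[OF sg vu] by auto
  have nz: "\<forall>x\<in>V. \<exists>i<d. \<phi> x i \<noteq> 0" using rep unfolding orth_rep_def by blast
  have orth: "\<And>x y. x \<in> V \<Longrightarrow> y \<in> V \<Longrightarrow> x \<noteq> y \<Longrightarrow> ip d (\<phi> x) (\<phi> y) = 0 \<longleftrightarrow> {x, y} \<notin> E"
    using rep unfolding orth_rep_ip by blast
  have pv: "ip d (\<phi> v) (\<phi> v) > 0" using nz vV ip_self_pos by blast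
  have vy: "ip d (\<phi> v) (\<phi> y) = 0" if "y \<in> V" "y \<noteq> v" "y \<noteq> u" for y
    using orth[OF vV that(1)] that uniq by auto
  have ipsi: "ip d (\<psi> u) (\<phi> y) = ip d (\<phi> u) (\<phi> y)" if "y \<in> V" "y \<noteq> v" "y \<noteq> u" for y
  proof -
    have "ip d (\<psi> u) (\<phi> y) = ip d (\<phi> u) (\<phi> y) - t * ip d (\<phi> v) (\<phi> y)"
      unfolding \<psi>_def ip_def by (simp add: algebra_simps sum_subtractf sum_distrib_left)
    then show ?thesis using vy[OF that] by simp
  qed
  have ipsi': "ip d (\<phi> y) (\<psi> u) = ip d (\<phi> y) (\<psi> u)" for y by simp
  have comm: "ip d f g = ip d g f" for f g unfolding ip_def by (simp add: mult.commute)
  show "orth_rep (V - {v}) {e \<in> E. v \<notin> e} d \<psi>"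
    unfolding orth_rep_ip
  proof (intro conjI ballI impI)
    fix x assume x: "x \<in> V - {v}"
    show "\<exists>i<d. \<psi> x i \<noteq> 0"
    proof (cases "x = u")
      case False then show ?thesis using nz x unfolding \<psi>_def by auto
    next
      case True
      show ?thesis
      proof (rule ccontr)
        assume "\<not> (\<exists>i<d. \<psi> x i \<noteq> 0)"
        then have "\<forall>i<d. \<psi> u i = 0" using True by simp
        then have "ip d (\<psi> u) (\<phi> w0) = 0" unfolding ip_def by simp
        then have "ip d (\<phi> u) (\<phi> w0) = 0" using ipsi[OF w0(1) w0v w0(2)] by simp
        then show False using orth[OF uv(2) w0(1)] w0 by auto
      qed
    qed
  next
    fix x y assume x: "x \<in> V - {v}" and y: "y \<in> V - {v}" and xy: "x \<noteq> y"
    have eE: "({x, y} \<notin> {e \<in> E. v \<notin> e}) = ({x, y} \<notin> E)" using x y by auto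
    have "ip d (\<psi> x) (\<psi> y) = ip d (\<phi> x) (\<phi> y)"
    proof (cases "x = u")
      case True
      then have "y \<noteq> u" using xy by simp
      then show ?thesis using True ipsi y unfolding \<psi>_def by auto
    next
      case False
      show ?thesis
      proof (cases "y = u")
        case True
        have "\<psi> x = \<phi> x" using False unfolding \<psi>_def by simp
        then show ?thesis using False ipsi[of x] x comm[of "\<psi> x" "\<psi> y"] comm[of "\<phi> x" "\<phi> y"] True xy by auto
      next
        case False
        then show ?thesis using \<open>x \<noteq> u\<close> unfolding \<psi>_def by simp
      qed
    qed
    then show "(ip d (\<psi> x) (\<psi> y) = 0) = ({x, y} \<notin> {e \<in> E. v \<notin> e})"
      using eE orth x y xy by auto
  qed
  fix T assume fT: "finite T" and TV: "T \<subseteq> V - {v}" and ind: "indep d \<psi> T"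
  show "indep d \<phi> (insert v T)" unfolding indep_def
  proof (intro allI impI)
    fix x assume h: "\<forall>i<d. (\<Sum>w\<in>insert v T. x w * \<phi> w i) = 0"
    have vT: "v \<notin> T" using TV by auto
    have L: "x v * \<phi> v i + (\<Sum>w\<in>T. x w * \<phi> w i) = 0" if "i < d" for i
      using h that fT vT by simp
    define s where "s = (if u \<in> T then x u else 0)"
    have S1: "(\<Sum>w\<in>T. x w * ip d (\<phi> w) (\<phi> v)) = s * ip d (\<phi> u) (\<phi> v)"
    proof -
      have "(\<Sum>w\<in>T. x w * ip d (\<phi> w) (\<phi> v)) = (\<Sum>w\<in>T. if w = u then x u * ip d (\<phi> u) (\<phi> v) else 0)"
      proof (rule sum.cong)
        fix w assume w: "w \<in> T"
        show "x w * ip d (\<phi> w) (\<phi> v) = (if w = u then x u * ip d (\<phi> u) (\<phi> v) else 0)"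
          using vy[of w] w TV comm by auto
      qed simp
      then show ?thesis using fT unfolding s_def by (simp add: sum.delta)
    qed
    have "0 = (\<Sum>i<d. (x v * \<phi> v i + (\<Sum>w\<in>T. x w * \<phi> w i)) * \<phi> v i)"
      using L by simp
    also have "\<dots> = (\<Sum>i<d. x v * (\<phi> v i * \<phi> v i)) + (\<Sum>i<d. \<Sum>w\<in>T. x w * (\<phi> w i * \<phi> v i))"
      by (simp add: distrib_right sum.distrib sum_distrib_right mult.assoc)
    also have "(\<Sum>i<d. \<Sum>w\<in>T. x w * (\<phi> w i * \<phi> v i)) = (\<Sum>w\<in>T. \<Sum>i<d. x w * (\<phi> w i * \<phi> v i))"
      by (rule sum.swap)
    also have "(\<Sum>i<d. x v * (\<phi> v i * \<phi> v i)) + (\<Sum>w\<in>T. \<Sum>i<d. x w * (\<phi> w i * \<phi> v i))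
        = x v * ip d (\<phi> v) (\<phi> v) + (\<Sum>w\<in>T. x w * ip d (\<phi> w) (\<phi> v))"
      unfolding ip_def by (simp add: sum_distrib_left)
    finally have key: "x v * ip d (\<phi> v) (\<phi> v) + s * ip d (\<phi> u) (\<phi> v) = 0" using S1 by simp
    have S2: "(\<Sum>w\<in>T. x w * \<psi> w i) = (\<Sum>w\<in>T. x w * \<phi> w i) - s * t * \<phi> v i" for i
    proof -
      have "(\<Sum>w\<in>T. x w * \<psi> w i) = (\<Sum>w\<in>T. x w * \<phi> w i - (if w = u then x u * t * \<phi> v i else 0))"
        by (rule sum.cong) (auto simp: \<psi>_def algebra_simps)
      then show ?thesis using fT unfolding s_def by (simp add: sum_subtractf sum.delta)
    qed
    have "x v + s * t = 0" using key pv unfolding t_def by (simp add: field_simps)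
    have "\<forall>i<d. (\<Sum>w\<in>T. x w * \<psi> w i) = 0"
    proof (intro allI impI)
      fix i assume i: "i < d"
      have "(\<Sum>w\<in>T. x w * \<phi> w i) = - (x v * \<phi> v i)" using L[OF i] by linarith
      then have "(\<Sum>w\<in>T. x w * \<psi> w i) = - ((x v + s * t) * \<phi> v i)" using S2[of i]
        by (simp add: algebra_simps)
      then show "(\<Sum>w\<in>T. x w * \<psi> w i) = 0" using \<open>x v + s * t = 0\<close> by simp
    qed
    then have xT: "\<forall>w\<in>T. x w = 0" using ind unfolding indep_def by blast
    then have "(\<Sum>w\<in>T. x w * \<phi> w i) = 0" for i by simp
    then have "\<forall>i<d. x v * \<phi> v i = 0" using L by simp
    then have "x v = 0" using nz vV by auto
    then show "\<forall>w\<in>insert v T. x w = 0" using xT by simp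
  qed
qed


lemma lower_bound:
  assumes "simple_graph V E" "necklace V E" "orth_rep V E d \<phi>"
  shows "\<exists>S\<subseteq>V. card S \<le> card (cycles V E) + 1 \<and> indep d \<phi> (V - S)"
  using assms
proof (induction "card V" arbitrary: V E \<phi> rule: less_induct)
  case less
  have sg: "simple_graph V E" and nl: "necklace V E" and rep: "orth_rep V E d \<phi>" using less.prems by auto
  have finV: "finite V" using sg unfolding simple_graph_def by blast
  have cg: "connected_graph V E" using nl unfolding necklace_def by blast
  have neV: "V \<noteq> {}" using cg unfolding connected_graph_def by blast
  have nz: "\<forall>x\<in>V. \<exists>i<d. \<phi> x i \<noteq> 0" using rep unfolding orth_rep_def by blast
  have "card V > 0" using neV finV by (simp add: card_gt_0_iff)
  then consider "card V = 1" | "card V \<ge> 2" by linarith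
  then show ?case
  proof cases
    case 1
    have "indep d \<phi> (V - V)" unfolding indep_def by simp
    then show ?thesis using 1 by (intro exI[of _ V]) simp
  next
    case 2
    obtain v where vV: "v \<in> V" and cg': "connected_graph (V - {v}) {e \<in> E. v \<notin> e}"
      using exists_noncut[OF sg cg 2] by blast
    define V' where "V' = V - {v}"
    define E' where "E' = {e \<in> E. v \<notin> e}"
    have sg': "simple_graph V' E'" unfolding V'_def E'_def using simple_del[OF sg] .
    have nl': "necklace V' E'" unfolding V'_def E'_def using necklace_del[OF nl cg' finV] .
    have cV': "card V' < card V" unfolding V'_def by (rule card_Diff1_less[OF finV vV])
    have "V \<noteq> {v}" using 2 by auto
    then obtain w where w: "w \<in> V" "w \<noteq> v" using vV by blast
    have "(v, w) \<in> (rel E)\<^sup>*" using cg vV w unfolding connected_rel by blast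
    then obtain u where vu: "{v, u} \<in> E" using first_step w(2) by metis
    have uV: "u \<in> V" "u \<noteq> v" using edge_card[OF sg vu] by auto
    consider (cyc) a b where "{v, a} \<in> E" "{v, b} \<in> E" "a \<noteq> b" | (pend) "\<forall>w. {v, w} \<in> E \<longrightarrow> w = u"
      using vu by blast
    then show ?thesis
    proof cases
      case cyc
      obtain C where C: "C \<in> cycles V E" "v \<in> \<Union>C" using cycle_through[OF sg vV cyc cg'] by blast
      have cc: "card (cycles V E) = card (cycles V' E') + 1"
        unfolding V'_def E'_def using card_cycles_del[OF nl finV vV C] .
      have "orth_rep V' E' d \<phi>" unfolding V'_def E'_def using orth_rep_del[OF rep] .
      then obtain S' where S': "S' \<subseteq> V'" "card S' \<le> card (cycles V' E') + 1" "indep d \<phi> (V' - S')"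
        using less.hyps[OF cV' sg' nl'] by blast
      have "insert v S' \<subseteq> V" using S'(1) vV unfolding V'_def by blast
      moreover have "card (insert v S') \<le> card (cycles V E) + 1"
        using S'(2) cc card_insert_le_m1 by (metis add_le_mono1 card_insert_if finite_subset S'(1) finV V'_def
            finite_Diff le_SucI Suc_eq_plus1)
      moreover have "V - insert v S' = V' - S'" unfolding V'_def by blast
      ultimately show ?thesis using S'(3) by (intro exI[of _ "insert v S'"]) auto
    next
      case pend
      have "\<forall>C\<in>cycles V E. v \<notin> \<Union>C" using pendant_no_cycle[OF sg pend] by blast
      then have cyc_eq: "cycles V' E' = cycles V E" unfolding V'_def E'_def cycles_del[of V v E] by blast
      show ?thesis
      proof (cases "card V' = 1")
        case True
        have uV': "u \<in> V'" using uV unfolding V'_def by blast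
        then have "V' = {u}" using True finV unfolding V'_def
          by (metis card_1_singletonE singletonD)
        then have "V - {u} = {v}" unfolding V'_def using vV uV by blast
        moreover have "indep d \<phi> {v}" using nz vV by (intro indep_single) blast
        ultimately show ?thesis using uV by (intro exI[of _ "{u}"]) auto
      next
        case False
        have uV': "u \<in> V'" using uV unfolding V'_def by blast
        have "V' \<noteq> {u}" using False by auto
        then obtain w0 where w0: "w0 \<in> V'" "w0 \<noteq> u" using uV' by blast
        have "(u, w0) \<in> (rel E')\<^sup>*" using cg' uV' w0 unfolding connected_rel V'_def E'_def by blast
        then obtain z where uz: "{u, z} \<in> E'" using first_step w0(2) by metis
        have zprops: "z \<in> V" "z \<noteq> v" "z \<noteq> u" "{u, z} \<in> E"
          using uz edge_card[OF sg, of u z] unfolding E'_def by auto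
        define t where "t = ip d (\<phi> u) (\<phi> v) / ip d (\<phi> v) (\<phi> v)"
        define \<psi> where "\<psi> = \<phi>(u := (\<lambda>i. \<phi> u i - t * \<phi> v i))"
        note ps = pendant_step[OF rep sg vV pend vu zprops(1) zprops(3) zprops(4) zprops(2),
            folded t_def, folded \<psi>_def]
        have rep': "orth_rep V' E' d \<psi>" using ps(1) unfolding V'_def E'_def .
        obtain S' where S': "S' \<subseteq> V'" "card S' \<le> card (cycles V' E') + 1" "indep d \<psi> (V' - S')"
          using less.hyps[OF cV' sg' nl' rep'] by blast
        have "indep d \<phi> (insert v (V' - S'))"
          using ps(2)[of "V' - S'"] S'(3) finV unfolding V'_def by auto
        moreover have "insert v (V' - S') = V - S'" using S'(1) vV unfolding V'_def by blast
        moreover have "S' \<subseteq> V" using S'(1) unfolding V'_def by blast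
        ultimately show ?thesis using S'(2) cyc_eq by (intro exI[of _ S']) auto
      qed
    qed
  qed
qed


definition pf :: "nat \<Rightarrow> nat \<Rightarrow> real" where
  "pf i j = (if j + 1 = i then 1 else 0) + (if j = i then 1 else 0)"

lemma sum_shift_delta: "(\<Sum>j<(m::nat). if j + 1 = (i::nat) then g j else (0::real)) = (if 1 \<le> i \<and> i - 1 < m then g (i - 1) else 0)"
proof (cases "i = 0")
  case True then show ?thesis by simp
next
  case False
  then have "(\<Sum>j<m. if j + 1 = i then g j else (0::real)) = (\<Sum>j<m. if j = i - 1 then g j else 0)"
    by (intro sum.cong) auto
  also have "\<dots> = (if i - 1 < m then g (i - 1) else 0)" by (simp add: sum.delta)
  finally show ?thesis using False by simp
qed

lemma ip_pf: "ip m (pf i) g = (if 1 \<le> i \<and> i - 1 < m then g (i - 1) else 0) + (if i < m then g i else 0)"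
proof -
  have "ip m (pf i) g = (\<Sum>j<m. (if j + 1 = i then g j else 0) + (if j = i then g j else 0))"
    unfolding ip_def pf_def by (intro sum.cong) auto
  also have "\<dots> = (\<Sum>j<m. if j + 1 = i then g j else 0) + (\<Sum>j<m. if j = i then g j else 0)"
    by (simp add: sum.distrib)
  finally show ?thesis using sum_shift_delta[where m=m and i=i and g=g] by (simp add: sum.delta)
qed

definition cf :: "nat \<Rightarrow> nat \<Rightarrow> nat \<Rightarrow> real" where
  "cf k i = (if i = k - 1 then (\<lambda>j. (-1) ^ j) else pf i)"

lemma cf_ip:
  assumes k: "k \<ge> 3" and i: "i < k" and i': "i' < k" and ne: "i \<noteq> i'"
  shows "ip (k - 2) (cf k i) (cf k i') = 0 \<longleftrightarrow> \<not> (i' = (i + 1) mod k \<or> i = (i' + 1) mod k)"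
proof -
  define m where "m = k - 2"
  have km: "k = m + 2" "m \<ge> 1" using k unfolding m_def by auto
  have comm: "ip d f g = ip d g f" for d f g unfolding ip_def by (simp add: mult.commute)
  have pp: "ip m (pf a) (pf b) = 0 \<longleftrightarrow> \<not> (b = a + 1 \<or> a = b + 1)" if "a \<le> m" "b \<le> m" "a \<noteq> b" for a b
    using that unfolding ip_pf by (auto simp: pf_def)
  have pa: "ip m (pf a) (\<lambda>j. (-1) ^ j) = 0 \<longleftrightarrow> \<not> (a = 0 \<or> a = m)" if "a \<le> m" for a
  proof (cases "a = 0")
    case True then show ?thesis using km unfolding ip_pf by simp
  next
    case False
    then obtain b where b: "a = Suc b" by (cases a) auto
    show ?thesis
    proof (cases "a = m")
      case True then show ?thesis using b km unfolding ip_pf by simp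
    next
      case False
      then show ?thesis using b that km unfolding ip_pf by simp
    qed
  qed
  show ?thesis
  proof (cases "i = k - 1")
    case True
    then have i'k: "i' < k - 1" using i' ne by auto
    then have "i' \<le> m" unfolding m_def using km by simp
    moreover have "(i' = (i + 1) mod k \<or> i = (i' + 1) mod k) \<longleftrightarrow> (i' = 0 \<or> i' = m)"
      using True km i'k by auto
    moreover have "cf k i = (\<lambda>j. (-1) ^ j)" "cf k i' = pf i'" using True i'k unfolding cf_def by auto
    ultimately show ?thesis using pa[of i'] comm unfolding m_def by metis
  next
    case False
    then have il: "i \<le> m" using i km by simp
    have cfi: "cf k i = pf i" using False unfolding cf_def by auto
    show ?thesis
    proof (cases "i' = k - 1")
      case True
      moreover have "(i' = (i + 1) mod k \<or> i = (i' + 1) mod k) \<longleftrightarrow> (i = 0 \<or> i = m)"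
        using True km il by auto
      moreover have "cf k i' = (\<lambda>j. (-1) ^ j)" using True unfolding cf_def by auto
      ultimately show ?thesis using pa[OF il] cfi unfolding m_def by metis
    next
      case False2: False
      then have il': "i' \<le> m" using i' km by simp
      have cfi': "cf k i' = pf i'" using False2 unfolding cf_def by auto
      have "(i' = (i + 1) mod k \<or> i = (i' + 1) mod k) \<longleftrightarrow> (i' = i + 1 \<or> i = i' + 1)"
        using il il' km by auto
      then show ?thesis using pp[OF il il' ne] cfi cfi' unfolding m_def by metis
    qed
  qed
qed

lemma cf_nz:
  assumes k: "k \<ge> 3" and i: "i < k"
  shows "\<exists>j<k - 2. cf k i j \<noteq> 0"
proof (cases "i = k - 1")
  case True then show ?thesis using k by (intro exI[of _ 0]) (auto simp: cf_def)
next
  case False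
  show ?thesis
  proof (cases "i < k - 2")
    case True then show ?thesis using False by (intro exI[of _ i]) (auto simp: cf_def pf_def)
  next
    case F2: False
    then have "i = k - 2" using False i by auto
    then show ?thesis using k False by (intro exI[of _ "k - 3"]) (auto simp: cf_def pf_def)
  qed
qed

lemma cyc_adj:
  assumes "distinct vs" "i < length vs" "i' < length vs"
  shows "{vs ! i, vs ! i'} \<in> cycle_edges vs \<longleftrightarrow> (i' = (i + 1) mod length vs \<or> i = (i' + 1) mod length vs)"
proof
  assume "{vs ! i, vs ! i'} \<in> cycle_edges vs"
  then obtain j where j: "j < length vs" "{vs ! i, vs ! i'} = {vs ! j, vs ! ((j + 1) mod length vs)}"
    unfolding cycle_edges_def by blast
  have jm: "(j + 1) mod length vs < length vs" using j(1) by (intro mod_less_divisor) linarith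
  have inj: "vs ! a = vs ! b \<longleftrightarrow> a = b" if "a < length vs" "b < length vs" for a b
    using nth_eq_iff_index_eq[OF assms(1) that] .
  from j(2) consider "vs ! i = vs ! j \<and> vs ! i' = vs ! ((j + 1) mod length vs)"
    | "vs ! i = vs ! ((j + 1) mod length vs) \<and> vs ! i' = vs ! j" by (auto simp: doubleton_eq_iff)
  then show "i' = (i + 1) mod length vs \<or> i = (i' + 1) mod length vs"
    by cases (use inj assms(2,3) j(1) jm in auto)
next
  assume "i' = (i + 1) mod length vs \<or> i = (i' + 1) mod length vs"
  then show "{vs ! i, vs ! i'} \<in> cycle_edges vs"
    unfolding cycle_edges_def using assms(2,3) by (auto simp: insert_commute)
qed

lemma cycle_rep:
  assumes "distinct vs" "length vs \<ge> 3"
  shows "\<exists>\<phi>. orth_rep (set vs) (cycle_edges vs) (length vs - 2) \<phi>"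
proof -
  define k where "k = length vs"
  define idx where "idx x = (THE i. i < k \<and> vs ! i = x)" for x
  have idx: "idx (vs ! i) = i" if "i < k" for i
    unfolding idx_def using that nth_eq_iff_index_eq[OF assms(1)] k_def by (intro the_equality) auto
  define \<phi> where "\<phi> x = cf k (idx x)" for x
  have "orth_rep (set vs) (cycle_edges vs) (k - 2) \<phi>"
    unfolding orth_rep_ip
  proof (intro conjI ballI impI)
    fix x assume "x \<in> set vs"
    then obtain i where i: "i < k" "vs ! i = x" unfolding k_def by (auto simp: in_set_conv_nth)
    show "\<exists>i<k - 2. \<phi> x i \<noteq> 0" using cf_nz[of k i] assms(2) i idx unfolding \<phi>_def k_def by auto
  next
    fix x y assume "x \<in> set vs" "y \<in> set vs" "x \<noteq> y"
    then obtain i i' where i: "i < k" "vs ! i = x" and i': "i' < k" "vs ! i' = y"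
      unfolding k_def by (auto simp: in_set_conv_nth)
    have "i \<noteq> i'" using i i' \<open>x \<noteq> y\<close> by auto
    then show "(ip (k - 2) (\<phi> x) (\<phi> y) = 0) = ({x, y} \<notin> cycle_edges vs)"
      using cf_ip[of k i i'] cyc_adj[OF assms(1), of i i'] assms(2) i i' idx unfolding \<phi>_def k_def by auto
  qed
  then show ?thesis unfolding k_def by blast
qed


lemma cycles_mono: "V' \<subseteq> V \<Longrightarrow> E' \<subseteq> E \<Longrightarrow> cycles V' E' \<subseteq> cycles V E"
proof
  fix C assume a: "V' \<subseteq> V" "E' \<subseteq> E" and "C \<in> cycles V' E'"
  then obtain vs where vs: "C = cycle_edges vs" "distinct vs" "length vs \<ge> 3" "set vs \<subseteq> V'" "cycle_edges vs \<subseteq> E'"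
    unfolding cycles_def by blast
  have "set vs \<subseteq> V" "cycle_edges vs \<subseteq> E" using vs(4,5) a by auto
  then show "C \<in> cycles V E" unfolding cycles_def using vs(1-3) by blast
qed

lemma necklace_sub:
  assumes "necklace V E" "V' \<subseteq> V" "E' \<subseteq> E" "connected_graph V' E'" "finite V"
  shows "necklace V' E'"
  unfolding necklace_def
proof (intro conjI ballI)
  show "connected_graph V' E'" by fact
  fix w assume w: "w \<in> V'"
  have "{C \<in> cycles V' E'. w \<in> \<Union>C} \<subseteq> {C \<in> cycles V E. w \<in> \<Union>C}"
    using cycles_mono[OF assms(2,3)] by blast
  moreover have "finite {C \<in> cycles V E. w \<in> \<Union>C}" using finite_cycles[OF assms(5)] by simp
  ultimately have "card {C \<in> cycles V' E'. w \<in> \<Union>C} \<le> card {C \<in> cycles V E. w \<in> \<Union>C}"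
    by (rule card_mono[rotated])
  also have "\<dots> \<le> 1" using assms(1,2) w unfolding necklace_def by blast
  finally show "card {C \<in> cycles V' E'. w \<in> \<Union>C} \<le> 1" .
qed

lemma necklace_same_cycle:
  assumes "necklace V E" "finite V" "y \<in> V" "C1 \<in> cycles V E" "C2 \<in> cycles V E" "y \<in> \<Union>C1" "y \<in> \<Union>C2"
  shows "C1 = C2"
proof -
  have "card {C \<in> cycles V E. y \<in> \<Union>C} \<le> 1" using assms(1,3) unfolding necklace_def by blast
  moreover have "finite {C \<in> cycles V E. y \<in> \<Union>C}" using finite_cycles[OF assms(2)] by simp
  moreover have m12: "C1 \<in> {C \<in> cycles V E. y \<in> \<Union>C}" "C2 \<in> {C \<in> cycles V E. y \<in> \<Union>C}" using assms by auto
  ultimately have "\<forall>a\<in>{C \<in> cycles V E. y \<in> \<Union>C}. \<forall>b\<in>{C \<in> cycles V E. y \<in> \<Union>C}. a = b"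
    using card_le_Suc0_iff_eq[of "{C \<in> cycles V E. y \<in> \<Union>C}"] by simp
  then show ?thesis using m12 by blast
qed

lemma exit_edge:
  assumes "(a, b) \<in> (rel E)\<^sup>*" "a \<in> W" "b \<notin> W"
  shows "\<exists>y z. y \<in> W \<and> z \<notin> W \<and> {y, z} \<in> E"
  using assms
proof (induction rule: rtrancl_induct)
  case base then show ?case by simp
next
  case (step y z)
  have yz: "{y, z} \<in> E" using step(2) by simp
  show ?case
  proof (cases "y \<in> W")
    case True then show ?thesis using yz step.prems(2) by blast
  next
    case False then show ?thesis using step.IH step.prems(1) by blast
  qed
qed

lemma cycles_elem: "C \<in> cycles V E \<Longrightarrow> \<exists>vs. C = cycle_edges vs \<and> distinct vs \<and> length vs \<ge> 3 \<and> set vs \<subseteq> V \<and> cycle_edges vs \<subseteq> E \<and> \<Union>C = set vs"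
proof -
  assume "C \<in> cycles V E"
  then obtain vs where vs: "C = cycle_edges vs" "distinct vs" "length vs \<ge> 3" "set vs \<subseteq> V" "cycle_edges vs \<subseteq> E"
    unfolding cycles_def by blast
  have "vs \<noteq> []" using vs(3) by auto
  then have "\<Union>C = set vs" using Union_cycle_edges vs(1) by blast
  then show ?thesis using vs by blast
qed

lemma no_bridge_cycle:
  assumes sg: "simple_graph V E" and nl: "necklace V E" and c2: "card V \<ge> 2"
    and noB: "\<forall>e\<in>E. \<exists>C\<in>cycles V E. e \<in> C"
  shows "\<exists>vs. distinct vs \<and> length vs \<ge> 3 \<and> V = set vs \<and> E = cycle_edges vs \<and> cycles V E = {cycle_edges vs}"
proof -
  have finV: "finite V" using sg unfolding simple_graph_def by blast
  have cg: "connected_graph V E" using nl unfolding necklace_def by blast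
  have "V \<noteq> {}" using c2 by auto
  then obtain x where x: "x \<in> V" by blast
  have "V \<noteq> {x}" using c2 by auto
  then obtain w where w: "w \<in> V" "w \<noteq> x" using x by blast
  have "(x, w) \<in> (rel E)\<^sup>*" using cg x w unfolding connected_rel by blast
  then obtain u where xu: "{x, u} \<in> E" using first_step w(2) by metis
  then obtain C0 where C0: "C0 \<in> cycles V E" "{x, u} \<in> C0" using noB by blast
  obtain vs where vs: "C0 = cycle_edges vs" "distinct vs" "length vs \<ge> 3" "set vs \<subseteq> V"
      "cycle_edges vs \<subseteq> E" "\<Union>C0 = set vs" using cycles_elem[OF C0(1)] by blast
  define W where "W = set vs"
  have same: "C = C0" if "C \<in> cycles V E" "y \<in> \<Union>C" "y \<in> W" for C y
    using necklace_same_cycle[OF nl finV _ that(1) C0(1) that(2)] that vs(4,6) unfolding W_def by blast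
  have VW: "V = W"
  proof (rule ccontr)
    assume "V \<noteq> W"
    then obtain z where z: "z \<in> V" "z \<notin> W" using vs(4) unfolding W_def by blast
    have "x \<in> W" using C0(2) vs(6) unfolding W_def by blast
    then have "(x, z) \<in> (rel E)\<^sup>*" using cg x z unfolding connected_rel by blast
    then obtain y z' where yz: "y \<in> W" "z' \<notin> W" "{y, z'} \<in> E" using exit_edge[OF _ \<open>x \<in> W\<close> z(2)] by blast
    then obtain C where C: "C \<in> cycles V E" "{y, z'} \<in> C" using noB by blast
    have "C = C0" using same[OF C(1) _ yz(1)] C(2) by blast
    then have "z' \<in> W" using C(2) vs(6) unfolding W_def by blast
    then show False using yz(2) by simp
  qed
  have EC: "E = cycle_edges vs"
  proof
    show "cycle_edges vs \<subseteq> E" by (rule vs(5))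
    show "E \<subseteq> cycle_edges vs"
    proof
      fix e assume e: "e \<in> E"
      then obtain C where C: "C \<in> cycles V E" "e \<in> C" using noB by blast
      have "card e = 2" using e sg unfolding simple_graph_def by blast
      then obtain p q where "e = {p, q}" by (auto simp: card_2_iff)
      then have "p \<in> V" using edge_card[OF sg] e by blast
      then have "C = C0" using same[OF C(1), of p] C(2) \<open>e = {p, q}\<close> VW by blast
      then show "e \<in> cycle_edges vs" using C(2) vs(1) by simp
    qed
  qed
  have "cycles V E = {C0}"
  proof
    show "{C0} \<subseteq> cycles V E" using C0(1) by simp
    show "cycles V E \<subseteq> {C0}"
    proof
      fix C assume C: "C \<in> cycles V E"
      obtain ws where ws: "C = cycle_edges ws" "distinct ws" "length ws \<ge> 3" "set ws \<subseteq> V"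
        "\<Union>C = set ws" using cycles_elem[OF C] by blast
      obtain y where "y \<in> set ws" using ws(3) by (cases ws) auto
      then show "C \<in> {C0}" using same[OF C, of y] ws VW by auto
    qed
  qed
  then show ?thesis using vs VW EC unfolding W_def by blast
qed


lemma side_closed:
  assumes sg: "simple_graph V E" and x: "x \<in> {x \<in> V. (r, x) \<in> (rel (E - {e}))\<^sup>*}"
    and xy: "{x, y} \<in> E" "{x, y} \<noteq> e"
  shows "y \<in> {x \<in> V. (r, x) \<in> (rel (E - {e}))\<^sup>*}"
proof -
  have "(x, y) \<in> rel (E - {e})" using xy by simp
  then have "(r, y) \<in> (rel (E - {e}))\<^sup>*" using x by (auto intro: rtrancl_into_rtrancl)
  moreover have "y \<in> V" using edge_card[OF sg xy(1)] by blast
  ultimately show ?thesis by blast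
qed

lemma side_conn:
  fixes e :: "'a set"
  assumes sg: "simple_graph V E" and r: "r \<in> V"
  defines "X \<equiv> {x \<in> V. (r, x) \<in> (rel (E - {e}))\<^sup>*}"
  shows "connected_graph X {f \<in> E. f \<subseteq> X}"
proof -
  have reach: "x \<in> X \<and> (r, x) \<in> (rel {f \<in> E. f \<subseteq> X})\<^sup>*" if "(r, x) \<in> (rel (E - {e}))\<^sup>*" for x
    using that
  proof (induction rule: rtrancl_induct)
    case base then show ?case using r unfolding X_def by simp
  next
    case (step y z)
    have yz: "{y, z} \<in> E" "{y, z} \<noteq> e" using step(2) by auto
    have zX: "z \<in> X" using side_closed[OF sg _ yz] step.IH unfolding X_def by blast
    then have "{y, z} \<in> {f \<in> E. f \<subseteq> X}" using step.IH yz by auto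
    then have "(y, z) \<in> rel {f \<in> E. f \<subseteq> X}" by simp
    then show ?case using zX step.IH by (auto intro: rtrancl_into_rtrancl)
  qed
  have "r \<in> X" using r unfolding X_def by simp
  moreover have "(x, y) \<in> (rel {f \<in> E. f \<subseteq> X})\<^sup>*" if "x \<in> X" "y \<in> X" for x y
  proof -
    have "(r, x) \<in> (rel {f \<in> E. f \<subseteq> X})\<^sup>*" "(r, y) \<in> (rel {f \<in> E. f \<subseteq> X})\<^sup>*"
      using reach that unfolding X_def by auto
    then show ?thesis using rel_sym_rtrancl by (rule_tac rtrancl_trans) auto
  qed
  ultimately show ?thesis unfolding connected_rel by blast
qed

lemma cycle_side:
  assumes sg: "simple_graph V E" and C: "C \<in> cycles V E" and eC: "e \<notin> C"
    and ex: "y \<in> \<Union>C" "y \<in> {x \<in> V. (r, x) \<in> (rel (E - {e}))\<^sup>*}"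
  shows "C \<in> cycles {x \<in> V. (r, x) \<in> (rel (E - {e}))\<^sup>*} {f \<in> E. f \<subseteq> {x \<in> V. (r, x) \<in> (rel (E - {e}))\<^sup>*}}"
proof -
  define X where "X = {x \<in> V. (r, x) \<in> (rel (E - {e}))\<^sup>*}"
  obtain vs where vs: "C = cycle_edges vs" "distinct vs" "length vs \<ge> 3" "set vs \<subseteq> V"
      "cycle_edges vs \<subseteq> E" "\<Union>C = set vs" using cycles_elem[OF C] by blast
  define k where "k = length vs"
  obtain i0 where i0: "i0 < k" "vs ! i0 = y" using ex(1) vs(6) unfolding k_def by (auto simp: in_set_conv_nth)
  have step: "vs ! ((i + 1) mod k) \<in> X" if "i < k" "vs ! i \<in> X" for i
  proof -
    have "{vs ! i, vs ! ((i + 1) mod k)} \<in> C" using that(1) vs(1) unfolding k_def cycle_edges_def by blast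
    then have "{vs ! i, vs ! ((i + 1) mod k)} \<in> E" "{vs ! i, vs ! ((i + 1) mod k)} \<noteq> e" using vs(1,5) eC by auto
    then show ?thesis using side_closed[OF sg _] that(2) unfolding X_def by blast
  qed
  have all: "vs ! ((i0 + j) mod k) \<in> X" for j
  proof (induction j)
    case 0 then show ?case using i0 ex(2) unfolding X_def by simp
  next
    case (Suc j)
    have "(i0 + j) mod k < k" using i0(1) by simp
    from step[OF this Suc.IH] show ?case by (simp add: mod_Suc_eq)
  qed
  have "set vs \<subseteq> X"
  proof
    fix x assume "x \<in> set vs"
    then obtain i where i: "i < k" "vs ! i = x" unfolding k_def by (auto simp: in_set_conv_nth)
    have "(i0 + (k - i0 + i)) mod k = i" using i i0 by (simp add: mod_if)
    then show "x \<in> X" using all[of "k - i0 + i"] i by simp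
  qed
  moreover have "cycle_edges vs \<subseteq> {f \<in> E. f \<subseteq> X}" using vs(5) calculation cycle_edge_subset_set by blast
  ultimately show ?thesis unfolding X_def[symmetric] cycles_def using vs(1-3) by blast
qed


lemma bridge_split:
  assumes sg: "simple_graph V E" and nl: "necklace V E" and eE: "{a, b} \<in> E"
    and br: "\<forall>C\<in>cycles V E. {a, b} \<notin> C"
  defines "A \<equiv> {x \<in> V. (a, x) \<in> (rel (E - {{a, b}}))\<^sup>*}"
  defines "B \<equiv> {x \<in> V. (b, x) \<in> (rel (E - {{a, b}}))\<^sup>*}"
  shows "A \<inter> B = {}" "A \<union> B = V" "a \<in> A" "b \<in> B"
    "simple_graph A {f \<in> E. f \<subseteq> A}" "simple_graph B {f \<in> E. f \<subseteq> B}"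
    "necklace A {f \<in> E. f \<subseteq> A}" "necklace B {f \<in> E. f \<subseteq> B}"
    "card (cycles V E) = card (cycles A {f \<in> E. f \<subseteq> A}) + card (cycles B {f \<in> E. f \<subseteq> B})"
    "\<And>x y. x \<in> A \<Longrightarrow> y \<in> B \<Longrightarrow> {x, y} \<in> E \<longleftrightarrow> x = a \<and> y = b"
proof -
  define e where "e = {a, b}"
  define Ee where "Ee = E - {e}"
  have finV: "finite V" using sg unfolding simple_graph_def by blast
  have cg: "connected_graph V E" using nl unfolding necklace_def by blast
  have ab: "a \<noteq> b" "a \<in> V" "b \<in> V" using edge_card[OF sg eE] by auto
  show aA: "a \<in> A" using ab unfolding A_def by simp
  show bB: "b \<in> B" using ab unfolding B_def by simp
  have bA: "b \<notin> A"
  proof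
    assume "b \<in> A"
    then have "(a, b) \<in> (rel Ee)\<^sup>*" unfolding A_def Ee_def e_def by simp
    then obtain q where q: "q \<noteq> []" "hd q = a" "last q = b" "distinct q" "walk Ee q"
      using rtrancl_path by metis
    have lq: "length q \<ge> 2" using q ab by (cases q; cases "tl q") auto
    have l3: "length q \<ge> 3"
    proof (rule ccontr)
      assume "\<not> length q \<ge> 3"
      then have "length q = 2" using lq by simp
      then have "{q ! 0, q ! 1} \<in> Ee" using q(5) unfolding walk_def by simp
      moreover have "q ! 0 = a" "q ! 1 = b" using q(1-3) \<open>length q = 2\<close>
        by (auto simp: hd_conv_nth last_conv_nth)
      ultimately show False unfolding Ee_def e_def by simp
    qed
    have "set q \<subseteq> \<Union>Ee" using walk_set[OF q(5) lq] .
    then have sq: "set q \<subseteq> V" using sg unfolding simple_graph_def Ee_def by blast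
    have wq: "walk E q" using walk_mono[OF q(5)] unfolding Ee_def by blast
    have "{last q, hd q} \<in> E" using q eE by (simp add: insert_commute)
    then have Cq: "cycle_edges q \<in> cycles V E" using cycle_in_cycles[OF wq l3 _ q(4) sq] by blast
    have "{q ! (length q - 1), q ! ((length q - 1 + 1) mod length q)} \<in> cycle_edges q"
      using cycle_edge_in[of "length q - 1" q] lq by simp
    moreover have "length q - 1 + 1 = length q" using lq by simp
    ultimately have "{last q, hd q} \<in> cycle_edges q" using q(1) by (simp add: last_conv_nth hd_conv_nth)
    then have "{a, b} \<in> cycle_edges q" using q(2,3) by (simp add: insert_commute)
    then show False using br Cq by blast
  qed
  show disj: "A \<inter> B = {}"
  proof (rule ccontr)
    assume "A \<inter> B \<noteq> {}"
    then obtain x where "x \<in> A" "x \<in> B" by blast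
    then have "(a, x) \<in> (rel Ee)\<^sup>*" "(b, x) \<in> (rel Ee)\<^sup>*" unfolding A_def B_def Ee_def e_def by auto
    then have "(a, b) \<in> (rel Ee)\<^sup>*" using rel_sym_rtrancl by (rule_tac rtrancl_trans) auto
    then show False using bA ab unfolding A_def Ee_def e_def by simp
  qed
  have cover: "(a, x) \<in> (rel Ee)\<^sup>* \<or> (b, x) \<in> (rel Ee)\<^sup>*" if "(a, x) \<in> (rel E)\<^sup>*" for x
    using that
  proof (induction rule: rtrancl_induct)
    case base then show ?case by simp
  next
    case (step y z)
    have yz: "{y, z} \<in> E" using step(2) by simp
    show ?case
    proof (cases "{y, z} = e")
      case True
      then have "z = a \<or> z = b" unfolding e_def by (auto simp: doubleton_eq_iff)
      then show ?thesis by auto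
    next
      case False
      then have "(y, z) \<in> rel Ee" using yz unfolding Ee_def by simp
      then show ?thesis using step.IH by (auto intro: rtrancl_into_rtrancl)
    qed
  qed
  show cov: "A \<union> B = V"
  proof
    show "A \<union> B \<subseteq> V" unfolding A_def B_def by blast
    show "V \<subseteq> A \<union> B"
    proof
      fix x assume x: "x \<in> V"
      then have "(a, x) \<in> (rel E)\<^sup>*" using cg ab unfolding connected_rel by blast
      then show "x \<in> A \<union> B" using cover x unfolding A_def B_def Ee_def e_def by blast
    qed
  qed
  show cross: "\<And>x y. x \<in> A \<Longrightarrow> y \<in> B \<Longrightarrow> {x, y} \<in> E \<longleftrightarrow> x = a \<and> y = b"
  proof -
    fix x y assume x: "x \<in> A" and y: "y \<in> B"
    show "{x, y} \<in> E \<longleftrightarrow> x = a \<and> y = b"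
    proof
      assume xy: "{x, y} \<in> E"
      show "x = a \<and> y = b"
      proof (cases "{x, y} = e")
        case False
        then have "y \<in> A" using side_closed[OF sg _ xy, of a e] x unfolding A_def e_def by blast
        then show ?thesis using y disj by blast
      next
        case True
        then have "x = a \<and> y = b \<or> x = b \<and> y = a" unfolding e_def by (auto simp: doubleton_eq_iff)
        then show ?thesis using x bA by blast
      qed
    next
      assume "x = a \<and> y = b"
      then show "{x, y} \<in> E" using eE by simp
    qed
  qed
  show sgA: "simple_graph A {f \<in> E. f \<subseteq> A}" using sg finV unfolding simple_graph_def A_def by auto
  show sgB: "simple_graph B {f \<in> E. f \<subseteq> B}" using sg finV unfolding simple_graph_def B_def by auto
  have cA: "connected_graph A {f \<in> E. f \<subseteq> A}" unfolding A_def using side_conn[OF sg ab(2)] .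
  have cB: "connected_graph B {f \<in> E. f \<subseteq> B}" unfolding B_def using side_conn[OF sg ab(3)] .
  show "necklace A {f \<in> E. f \<subseteq> A}" using necklace_sub[OF nl _ _ cA finV] unfolding A_def by blast
  show "necklace B {f \<in> E. f \<subseteq> B}" using necklace_sub[OF nl _ _ cB finV] unfolding B_def by blast
  have split: "cycles V E = cycles A {f \<in> E. f \<subseteq> A} \<union> cycles B {f \<in> E. f \<subseteq> B}"
  proof
    show "cycles A {f \<in> E. f \<subseteq> A} \<union> cycles B {f \<in> E. f \<subseteq> B} \<subseteq> cycles V E"
      using cycles_mono[of A V "{f \<in> E. f \<subseteq> A}" E] cycles_mono[of B V "{f \<in> E. f \<subseteq> B}" E]
      unfolding A_def B_def by blast
    show "cycles V E \<subseteq> cycles A {f \<in> E. f \<subseteq> A} \<union> cycles B {f \<in> E. f \<subseteq> B}"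
    proof
      fix C assume C: "C \<in> cycles V E"
      obtain ws where ws: "C = cycle_edges ws" "length ws \<ge> 3" "set ws \<subseteq> V" "\<Union>C = set ws"
        using cycles_elem[OF C] by blast
      obtain y where y: "y \<in> set ws" using ws(2) by (cases ws) auto
      have eC: "{a, b} \<notin> C" using br C by blast
      have "y \<in> A \<or> y \<in> B" using y ws(3) cov by blast
      then show "C \<in> cycles A {f \<in> E. f \<subseteq> A} \<union> cycles B {f \<in> E. f \<subseteq> B}"
      proof
        assume "y \<in> A"
        then show ?thesis using cycle_side[OF sg C eC, of y a] y ws(4) unfolding A_def by blast
      next
        assume "y \<in> B"
        then show ?thesis using cycle_side[OF sg C eC, of y b] y ws(4) unfolding B_def by blast
      qed
    qed
  qed
  have dis: "cycles A {f \<in> E. f \<subseteq> A} \<inter> cycles B {f \<in> E. f \<subseteq> B} = {}"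
  proof (rule ccontr)
    assume "cycles A {f \<in> E. f \<subseteq> A} \<inter> cycles B {f \<in> E. f \<subseteq> B} \<noteq> {}"
    then obtain C where C: "C \<in> cycles A {f \<in> E. f \<subseteq> A}" "C \<in> cycles B {f \<in> E. f \<subseteq> B}" by blast
    obtain ws where ws: "length ws \<ge> 3" "set ws \<subseteq> A" "\<Union>C = set ws" using cycles_elem[OF C(1)] by blast
    obtain ws' where ws': "set ws' \<subseteq> B" "\<Union>C = set ws'" using cycles_elem[OF C(2)] by blast
    obtain y where "y \<in> set ws" using ws(1) by (cases ws) auto
    then show False using ws ws' disj by blast
  qed
  have finA: "finite (cycles A {f \<in> E. f \<subseteq> A})" "finite (cycles B {f \<in> E. f \<subseteq> B})"
  proof -
    have "finite A" "finite B" using finV unfolding A_def B_def by auto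
    then show "finite (cycles A {f \<in> E. f \<subseteq> A})" "finite (cycles B {f \<in> E. f \<subseteq> B})"
      using finite_cycles by blast+
  qed
  show "card (cycles V E) = card (cycles A {f \<in> E. f \<subseteq> A}) + card (cycles B {f \<in> E. f \<subseteq> B})"
    unfolding split using card_Un_disjoint[OF finA dis] .
qed


lemma sum_split3: "(\<Sum>i<p + 1 + (q::nat). (f i :: real)) = (\<Sum>i<p. f i) + f p + (\<Sum>j<q. f (p + 1 + j))"
  by (induction q) (simp_all add: add.assoc)

definition pairs_ok :: "'a set \<Rightarrow> 'a set set \<Rightarrow> nat \<Rightarrow> ('a \<Rightarrow> nat \<Rightarrow> real) \<Rightarrow> bool" where
  "pairs_ok V E d \<phi> \<longleftrightarrow> (\<forall>u\<in>V. \<forall>w\<in>V. u \<noteq> w \<longrightarrow> (ip d (\<phi> u) (\<phi> w) = 0 \<longleftrightarrow> {u, w} \<notin> E))"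

definition nz_ok :: "'a set \<Rightarrow> nat \<Rightarrow> ('a \<Rightarrow> nat \<Rightarrow> real) \<Rightarrow> bool" where
  "nz_ok V d \<phi> \<longleftrightarrow> (\<forall>v\<in>V. \<exists>i<d. \<phi> v i \<noteq> 0)"

lemma orth_rep_split: "orth_rep V E d \<phi> \<longleftrightarrow> nz_ok V d \<phi> \<and> pairs_ok V E d \<phi>"
  unfolding orth_rep_ip pairs_ok_def nz_ok_def by blast

lemma glue:
  assumes disj: "A \<inter> B = {}" and aA: "a \<in> A" and bB: "b \<in> B"
    and cross: "\<And>x y. x \<in> A \<Longrightarrow> y \<in> B \<Longrightarrow> {x, y} \<in> E \<longleftrightarrow> x = a \<and> y = b"
    and pA: "pairs_ok A {f \<in> E. f \<subseteq> A} dA \<phi>A" and pB: "pairs_ok B {f \<in> E. f \<subseteq> B} dB \<phi>B"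
    and nA: "nz_ok (A - {a}) dA \<phi>A" and nB: "nz_ok (B - {b}) dB \<phi>B"
  defines "\<phi> \<equiv> \<lambda>x i. (if x \<in> A then (if i < dA then \<phi>A x i else 0) else (if dA < i then \<phi>B x (i - dA - 1) else 0))
      + (if (x = a \<or> x = b) \<and> i = dA then 1 else 0)"
  shows "pairs_ok (A \<union> B) E (dA + 1 + dB) \<phi>" "nz_ok (A \<union> B) (dA + 1 + dB) \<phi>"
proof -
  have comm: "ip d f g = ip d g f" for d f g unfolding ip_def by (simp add: mult.commute)
  have ipsplit: "ip (dA + 1 + dB) f g = ip dA f g + f dA * g dA + ip dB (\<lambda>j. f (dA + 1 + j)) (\<lambda>j. g (dA + 1 + j))" for f g
    unfolding ip_def by (rule sum_split3)
  have ab: "a \<noteq> b" using aA bB disj by blast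
  have phiA: "\<phi> x i = \<phi>A x i" if "x \<in> A" "i < dA" for x i using that unfolding \<phi>_def by simp
  have phiA0: "\<phi> x (dA + 1 + j) = 0" if "x \<in> A" for x j using that unfolding \<phi>_def by simp
  have phiB: "\<phi> x (dA + 1 + j) = \<phi>B x j" if "x \<in> B" for x j using that disj unfolding \<phi>_def by auto
  have phiB0: "\<phi> x i = 0" if "x \<in> B" "i < dA" for x i using that disj unfolding \<phi>_def by auto
  have mid: "\<phi> x dA = (if x = a \<or> x = b then 1 else 0)" if "x \<in> A \<union> B" for x
    using that disj unfolding \<phi>_def by auto
  have AA: "ip (dA + 1 + dB) (\<phi> x) (\<phi> y) = ip dA (\<phi>A x) (\<phi>A y)" if "x \<in> A" "y \<in> A" "x \<noteq> y" for x y
  proof -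
    have "ip dA (\<phi> x) (\<phi> y) = ip dA (\<phi>A x) (\<phi>A y)" unfolding ip_def using phiA that by simp
    moreover have "\<phi> x dA * \<phi> y dA = 0" using mid that bB disj by auto
    moreover have "ip dB (\<lambda>j. \<phi> x (dA + 1 + j)) (\<lambda>j. \<phi> y (dA + 1 + j)) = 0" unfolding ip_def using phiA0 that by simp
    ultimately show ?thesis using ipsplit by simp
  qed
  have BB: "ip (dA + 1 + dB) (\<phi> x) (\<phi> y) = ip dB (\<phi>B x) (\<phi>B y)" if "x \<in> B" "y \<in> B" "x \<noteq> y" for x y
  proof -
    have "ip dA (\<phi> x) (\<phi> y) = 0" unfolding ip_def using phiB0 that by simp
    moreover have "\<phi> x dA * \<phi> y dA = 0" using mid that aA disj by auto
    moreover have "ip dB (\<lambda>j. \<phi> x (dA + 1 + j)) (\<lambda>j. \<phi> y (dA + 1 + j)) = ip dB (\<phi>B x) (\<phi>B y)"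
      unfolding ip_def using phiB that by simp
    ultimately show ?thesis using ipsplit by simp
  qed
  have AB: "ip (dA + 1 + dB) (\<phi> x) (\<phi> y) = (if x = a \<and> y = b then 1 else 0)" if "x \<in> A" "y \<in> B" for x y
  proof -
    have "ip dA (\<phi> x) (\<phi> y) = 0" unfolding ip_def using phiB0 that by simp
    moreover have "\<phi> x dA * \<phi> y dA = (if x = a \<and> y = b then 1 else 0)" using mid that disj aA bB by auto
    moreover have "ip dB (\<lambda>j. \<phi> x (dA + 1 + j)) (\<lambda>j. \<phi> y (dA + 1 + j)) = 0"
      unfolding ip_def using phiA0 that by simp
    ultimately show ?thesis using ipsplit by simp
  qed
  show "pairs_ok (A \<union> B) E (dA + 1 + dB) \<phi>" unfolding pairs_ok_def
  proof (intro ballI impI)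
    fix x y assume x: "x \<in> A \<union> B" and y: "y \<in> A \<union> B" and xy: "x \<noteq> y"
    consider "x \<in> A" "y \<in> A" | "x \<in> B" "y \<in> B" | "x \<in> A" "y \<in> B" | "x \<in> B" "y \<in> A" using x y by blast
    then show "(ip (dA + 1 + dB) (\<phi> x) (\<phi> y) = 0) = ({x, y} \<notin> E)"
    proof cases
      case 1 then show ?thesis using AA[OF 1 xy] pA xy unfolding pairs_ok_def by auto
    next
      case 2 then show ?thesis using BB[OF 2 xy] pB xy unfolding pairs_ok_def by auto
    next
      case 3 then show ?thesis using AB[OF 3] cross[OF 3] by auto
    next
      case 4 then show ?thesis using AB[OF 4(2,1)] cross[OF 4(2,1)] comm[of _ "\<phi> x" "\<phi> y"]
        by (auto simp: insert_commute)
    qed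
  qed
  show "nz_ok (A \<union> B) (dA + 1 + dB) \<phi>" unfolding nz_ok_def
  proof
    fix x assume x: "x \<in> A \<union> B"
    show "\<exists>i<dA + 1 + dB. \<phi> x i \<noteq> 0"
    proof (cases "x = a \<or> x = b")
      case True then show ?thesis using mid[OF x] by (intro exI[of _ dA]) auto
    next
      case False
      then consider "x \<in> A - {a}" | "x \<in> B - {b}" using x by blast
      then show ?thesis
      proof cases
        case 1
        then obtain i where "i < dA" "\<phi>A x i \<noteq> 0" using nA unfolding nz_ok_def by blast
        then show ?thesis using phiA 1 by (intro exI[of _ i]) auto
      next
        case 2
        then obtain j where "j < dB" "\<phi>B x j \<noteq> 0" using nB unfolding nz_ok_def by blast
        then show ?thesis using phiB 2 by (intro exI[of _ "dA + 1 + j"]) auto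
      qed
    qed
  qed
qed


lemma card1_no_cycles:
  assumes "card V = 1" shows "cycles V E = {}"
proof (rule ccontr)
  assume "cycles V E \<noteq> {}"
  then obtain C where "C \<in> cycles V E" by blast
  then obtain vs where vs: "distinct vs" "length vs \<ge> 3" "set vs \<subseteq> V" unfolding cycles_def by blast
  have "finite V" using assms by (simp add: card_ge_0_finite)
  then have "card (set vs) \<le> card V" using vs(3) by (rule card_mono)
  then show False using vs assms by (simp add: distinct_card)
qed

lemma upper_bound:
  assumes "simple_graph V E" "necklace V E"
  shows "\<exists>d \<phi>. int d = int (card V) - int (card (cycles V E)) - 1 \<and> pairs_ok V E d \<phi>
     \<and> (card V \<ge> 2 \<longrightarrow> nz_ok V d \<phi>)"
  using assms
proof (induction "card V" arbitrary: V E rule: less_induct)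
  case less
  have sg: "simple_graph V E" and nl: "necklace V E" using less.prems by auto
  have finV: "finite V" using sg unfolding simple_graph_def by blast
  have cg: "connected_graph V E" using nl unfolding necklace_def by blast
  have neV: "V \<noteq> {}" using cg unfolding connected_graph_def by blast
  have "card V > 0" using neV finV by (simp add: card_gt_0_iff)
  then consider "card V = 1" | "card V \<ge> 2" by linarith
  then show ?case
  proof cases
    case 1
    then obtain x where "V = {x}" by (auto simp: card_1_singleton_iff)
    then have "pairs_ok V E 0 (\<lambda>_ _. 0)" unfolding pairs_ok_def by simp
    then show ?thesis using 1 card1_no_cycles[OF 1] by (intro exI[of _ 0]) auto
  next
    case 2
    show ?thesis
    proof (cases "\<forall>e\<in>E. \<exists>C\<in>cycles V E. e \<in> C")
      case True
      obtain vs where vs: "distinct vs" "length vs \<ge> 3" "V = set vs" "E = cycle_edges vs"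
          "cycles V E = {cycle_edges vs}" using no_bridge_cycle[OF sg nl 2 True] by blast
      obtain \<phi> where "orth_rep (set vs) (cycle_edges vs) (length vs - 2) \<phi>" using cycle_rep[OF vs(1,2)] by blast
      then have r: "nz_ok V (length vs - 2) \<phi>" "pairs_ok V E (length vs - 2) \<phi>"
        using vs(3,4) unfolding orth_rep_split by auto
      have "card V = length vs" using vs(1,3) by (simp add: distinct_card)
      then have "int (length vs - 2) = int (card V) - int (card (cycles V E)) - 1" using vs(2,5) by simp
      then show ?thesis using r by blast
    next
      case False
      then obtain e where eE: "e \<in> E" and br: "\<forall>C\<in>cycles V E. e \<notin> C" by blast
      have "card e = 2" using eE sg unfolding simple_graph_def by blast
      then obtain a b where e: "e = {a, b}" by (auto simp: card_2_iff)
      define A where "A = {x \<in> V. (a, x) \<in> (rel (E - {{a, b}}))\<^sup>*}"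
      define B where "B = {x \<in> V. (b, x) \<in> (rel (E - {{a, b}}))\<^sup>*}"
      note bs = bridge_split[OF sg nl eE[unfolded e] br[unfolded e], folded A_def B_def]
      have fA: "finite A" "finite B" using finV unfolding A_def B_def by auto
      have cardAB: "card V = card A + card B" using card_Un_disjoint[OF fA bs(1)] bs(2) by simp
      have "card A > 0" "card B > 0" using fA bs(3,4) by (auto simp: card_gt_0_iff)
      then have lt: "card A < card V" "card B < card V" using cardAB by auto
      obtain dA \<phi>A where IA: "int dA = int (card A) - int (card (cycles A {f \<in> E. f \<subseteq> A})) - 1"
          "pairs_ok A {f \<in> E. f \<subseteq> A} dA \<phi>A" "card A \<ge> 2 \<longrightarrow> nz_ok A dA \<phi>A"
        using less.hyps[OF lt(1) bs(5) bs(7)] by blast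
      obtain dB \<phi>B where IB: "int dB = int (card B) - int (card (cycles B {f \<in> E. f \<subseteq> B})) - 1"
          "pairs_ok B {f \<in> E. f \<subseteq> B} dB \<phi>B" "card B \<ge> 2 \<longrightarrow> nz_ok B dB \<phi>B"
        using less.hyps[OF lt(2) bs(6) bs(8)] by blast
      have nA: "nz_ok (A - {a}) dA \<phi>A"
      proof (cases "card A \<ge> 2")
        case True then show ?thesis using IA(3) unfolding nz_ok_def by blast
      next
        case False
        then have "card A = 1" using \<open>card A > 0\<close> by linarith
        then obtain z where "A = {z}" by (auto simp: card_1_singleton_iff)
        then have "A = {a}" using bs(3) by simp
        then show ?thesis unfolding nz_ok_def by simp
      qed
      have nB: "nz_ok (B - {b}) dB \<phi>B"
      proof (cases "card B \<ge> 2")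
        case True then show ?thesis using IB(3) unfolding nz_ok_def by blast
      next
        case False
        then have "card B = 1" using \<open>card B > 0\<close> by linarith
        then obtain z where "B = {z}" by (auto simp: card_1_singleton_iff)
        then have "B = {b}" using bs(4) by simp
        then show ?thesis unfolding nz_ok_def by simp
      qed
      note g = glue[OF bs(1,3,4) bs(10) IA(2) IB(2) nA nB]
      have "int (dA + 1 + dB) = int (card V) - int (card (cycles V E)) - 1"
        using IA(1) IB(1) cardAB bs(9) by simp
      moreover obtain \<psi> where "pairs_ok (A \<union> B) E (dA + 1 + dB) \<psi>" "nz_ok (A \<union> B) (dA + 1 + dB) \<psi>"
        using g by blast
      ultimately show ?thesis unfolding bs(2) by blast
    qed
  qed
qed

theorem proposition5p4:
  fixes V :: "'a set" and E :: "'a set set" and c :: nat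
  assumes "simple_graph V E"
    and "necklace V E"
    and "card V \<ge> 2"
    and "card (cycles V E) = c"
  shows "int (mvr V E) = int (card V) - int c - 1"
proof -
  have finV: "finite V" using assms(1) unfolding simple_graph_def by blast
  obtain D \<phi> where D: "int D = int (card V) - int c - 1" "pairs_ok V E D \<phi>" "nz_ok V D \<phi>"
    using upper_bound[OF assms(1,2)] assms(3,4) by blast
  have rep: "orth_rep V E D \<phi>" using D unfolding orth_rep_split by blast
  have low: "D \<le> d" if rd: "orth_rep V E d \<psi>" for d \<psi>
  proof -
    obtain S where S: "S \<subseteq> V" "card S \<le> c + 1" "indep d \<psi> (V - S)"
      using lower_bound[OF assms(1,2) rd] assms(4) by blast
    have "card (V - S) \<le> d" using indep_card_le[OF _ S(3)] finV by blast
    moreover have "card (V - S) = card V - card S" using S(1) finV by (simp add: card_Diff_subset finite_subset)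
    moreover have "card S \<le> card V" using S(1) finV by (simp add: card_mono)
    ultimately show ?thesis using D(1) S(2) by linarith
  qed
  have "mvr V E = D" unfolding mvr_def
    by (rule Least_equality) (use rep low in blast)+
  then show ?thesis using D(1) by simp
qed


end
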